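(* Every complex $3$-dimensional $(-1,1)$-superalgebra of type $(2,1)$ is associative.
   Context: All algebras are over $\mathbb{C}$. A superalgebra is a $\mathbb{Z}_2$-graded algebra $A=A_0\oplus A_1$ with $A_iA_j\subseteq A_{i+j \bmod 2}$; $|x|\in\{0,1\}$ is the degree of a homogeneous $x$. It has type $(n,m)$ if $\dim A_0=n$, $\dim A_1=m$. The associator is $(x,y,z)=(xy)z-x(yz)$; a superalgebra is associative if $(x,y,z)=0$ for all $x,y,z$. A superalgebra is right alternative if $(x,y,z)=-(-1)^{|y||z|}(x,z,y)$ for all homogeneous $x,y,z$. A $(-1,1)$-superalgebra is a right alternative superalgebra satisfying $(x,y,z)+(-1)^{|x||y|+|x||z|}(y,z,x)+(-1)^{|z||y|+|x||z|}(z,x,y)=0$ for all homogeneous $x,y,z$. *)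

theory Defs
  imports Main "HOL.Complex"
begin

text \<open>A complex superalgebra of type (2,1) is presented by a homogeneous basis
  e1, e2 (even) and f (odd), with elements the coordinate functions
  bidx => complex, and multiplication given by structure constants
  c i j k (the k-th coordinate of the product of basis vectors i and j).\<close>

datatype bidx = E1 | E2 | F1

fun bdeg :: "bidx \<Rightarrow> nat" where
  "bdeg E1 = 0" | "bdeg E2 = 0" | "bdeg F1 = 1"

type_synonym sv = "bidx \<Rightarrow> complex"
type_synonym sconst = "bidx \<Rightarrow> bidx \<Rightarrow> bidx \<Rightarrow> complex"

definition basis_set :: "bidx set" where
  "basis_set = {E1, E2, F1}"

definition smul :: "sconst \<Rightarrow> sv \<Rightarrow> sv \<Rightarrow> sv" where
  "smul c x y = (\<lambda>k. \<Sum>i\<in>basis_set. \<Sum>j\<in>basis_set. x i * y j * c i j k)"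

definition graded :: "sconst \<Rightarrow> bool" where
  "graded c \<longleftrightarrow> (\<forall>i j k. c i j k \<noteq> 0 \<longrightarrow> bdeg k = (bdeg i + bdeg j) mod 2)"

definition homog :: "sv \<Rightarrow> nat \<Rightarrow> bool" where
  "homog x d \<longleftrightarrow> d \<in> {0, 1} \<and> (\<forall>i. bdeg i \<noteq> d \<longrightarrow> x i = 0)"

definition sassoc :: "sconst \<Rightarrow> sv \<Rightarrow> sv \<Rightarrow> sv \<Rightarrow> sv" where
  "sassoc c x y z = (\<lambda>k. smul c (smul c x y) z k - smul c x (smul c y z) k)"

definition associative :: "sconst \<Rightarrow> bool" where
  "associative c \<longleftrightarrow> (\<forall>x y z. sassoc c x y z = (\<lambda>k. 0))"

definition right_alternative :: "sconst \<Rightarrow> bool" where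
  "right_alternative c \<longleftrightarrow>
    (\<forall>x y z dx dy dz. homog x dx \<and> homog y dy \<and> homog z dz \<longrightarrow>
       sassoc c x y z = (\<lambda>k. - ((-1::complex) ^ (dy * dz)) * sassoc c x z y k))"

definition minus_one_one :: "sconst \<Rightarrow> bool" where
  "minus_one_one c \<longleftrightarrow> right_alternative c \<and>
    (\<forall>x y z dx dy dz. homog x dx \<and> homog y dy \<and> homog z dz \<longrightarrow>
       (\<forall>k. sassoc c x y z k
            + (-1::complex) ^ (dx * dy + dx * dz) * sassoc c y z x k
            + (-1::complex) ^ (dz * dy + dx * dz) * sassoc c z x y k = 0))"

end

theory Submission
  imports Defs
begin

definition ba :: "sconst \<Rightarrow> bidx \<Rightarrow> bidx \<Rightarrow> bidx \<Rightarrow> bidx \<Rightarrow> complex" where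
  "ba c i j l k = (c i j E1 * c E1 l k + c i j E2 * c E2 l k + c i j F1 * c F1 l k)
     - (c j l E1 * c i E1 k + c j l E2 * c i E2 k + c j l F1 * c i F1 k)"

lemma core:
  fixes c :: sconst
  assumes Z: "c E1 E1 F1 = 0" "c E1 E2 F1 = 0" "c E1 F1 E1 = 0" "c E1 F1 E2 = 0" "c E2 E1 F1 = 0" "c E2 E2 F1 = 0" "c E2 F1 E1 = 0" "c E2 F1 E2 = 0" "c F1 E1 E1 = 0" "c F1 E1 E2 = 0" "c F1 E2 E1 = 0" "c F1 E2 E2 = 0" "c F1 F1 F1 = 0"
    and RA: "\<And>i j l k. ba c i j l k = - ((-1::complex) ^ (bdeg j * bdeg l)) * ba c i l j k"
    and CY: "\<And>i j l k. ba c i j l k + (-1::complex) ^ (bdeg i * bdeg j + bdeg i * bdeg l) * ba c j l i k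
        + (-1::complex) ^ (bdeg l * bdeg j + bdeg i * bdeg l) * ba c l i j k = 0"
  shows "ba c i j l k = 0"
proof -
  have evE1E1E1E1: "ba c E1 E1 E1 E1 + ba c E1 E1 E1 E1 = 0" using RA[of E1 E1 E1 E1] by simp
  have evE1E1E1E2: "ba c E1 E1 E1 E2 + ba c E1 E1 E1 E2 = 0" using RA[of E1 E1 E1 E2] by simp
  have evE1E1E2E1: "ba c E1 E1 E2 E1 + ba c E1 E2 E1 E1 = 0" using RA[of E1 E1 E2 E1] by simp
  have evE1E1E2E2: "ba c E1 E1 E2 E2 + ba c E1 E2 E1 E2 = 0" using RA[of E1 E1 E2 E2] by simp
  have evE1E2E1E1: "ba c E1 E2 E1 E1 + ba c E1 E1 E2 E1 = 0" using RA[of E1 E2 E1 E1] by simp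
  have evE1E2E1E2: "ba c E1 E2 E1 E2 + ba c E1 E1 E2 E2 = 0" using RA[of E1 E2 E1 E2] by simp
  have evE1E2E2E1: "ba c E1 E2 E2 E1 + ba c E1 E2 E2 E1 = 0" using RA[of E1 E2 E2 E1] by simp
  have evE1E2E2E2: "ba c E1 E2 E2 E2 + ba c E1 E2 E2 E2 = 0" using RA[of E1 E2 E2 E2] by simp
  have evE2E1E1E1: "ba c E2 E1 E1 E1 + ba c E2 E1 E1 E1 = 0" using RA[of E2 E1 E1 E1] by simp
  have evE2E1E1E2: "ba c E2 E1 E1 E2 + ba c E2 E1 E1 E2 = 0" using RA[of E2 E1 E1 E2] by simp
  have evE2E1E2E1: "ba c E2 E1 E2 E1 + ba c E2 E2 E1 E1 = 0" using RA[of E2 E1 E2 E1] by simp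
  have evE2E1E2E2: "ba c E2 E1 E2 E2 + ba c E2 E2 E1 E2 = 0" using RA[of E2 E1 E2 E2] by simp
  have evE2E2E1E1: "ba c E2 E2 E1 E1 + ba c E2 E1 E2 E1 = 0" using RA[of E2 E2 E1 E1] by simp
  have evE2E2E1E2: "ba c E2 E2 E1 E2 + ba c E2 E1 E2 E2 = 0" using RA[of E2 E2 E1 E2] by simp
  have evE2E2E2E1: "ba c E2 E2 E2 E1 + ba c E2 E2 E2 E1 = 0" using RA[of E2 E2 E2 E1] by simp
  have evE2E2E2E2: "ba c E2 E2 E2 E2 + ba c E2 E2 E2 E2 = 0" using RA[of E2 E2 E2 E2] by simp
  have zE1E1E1E1: "ba c E1 E1 E1 E1 = 0" using evE1E1E1E1 evE1E1E1E2 evE1E1E2E1 evE1E1E2E2 evE1E2E1E1 evE1E2E1E2 evE1E2E2E1 evE1E2E2E2 evE2E1E1E1 evE2E1E1E2 evE2E1E2E1 evE2E1E2E2 evE2E2E1E1 evE2E2E1E2 evE2E2E2E1 evE2E2E2E2 Z unfolding ba_def by algebra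
  have zE1E1E1E2: "ba c E1 E1 E1 E2 = 0" using evE1E1E1E1 evE1E1E1E2 evE1E1E2E1 evE1E1E2E2 evE1E2E1E1 evE1E2E1E2 evE1E2E2E1 evE1E2E2E2 evE2E1E1E1 evE2E1E1E2 evE2E1E2E1 evE2E1E2E2 evE2E2E1E1 evE2E2E1E2 evE2E2E2E1 evE2E2E2E2 Z unfolding ba_def by algebra
  have zE1E1E2E1: "ba c E1 E1 E2 E1 = 0" using evE1E1E1E1 evE1E1E1E2 evE1E1E2E1 evE1E1E2E2 evE1E2E1E1 evE1E2E1E2 evE1E2E2E1 evE1E2E2E2 evE2E1E1E1 evE2E1E1E2 evE2E1E2E1 evE2E1E2E2 evE2E2E1E1 evE2E2E1E2 evE2E2E2E1 evE2E2E2E2 Z unfolding ba_def by algebra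
  have zE1E1E2E2: "ba c E1 E1 E2 E2 = 0" using evE1E1E1E1 evE1E1E1E2 evE1E1E2E1 evE1E1E2E2 evE1E2E1E1 evE1E2E1E2 evE1E2E2E1 evE1E2E2E2 evE2E1E1E1 evE2E1E1E2 evE2E1E2E1 evE2E1E2E2 evE2E2E1E1 evE2E2E1E2 evE2E2E2E1 evE2E2E2E2 Z unfolding ba_def by algebra
  have zE1E2E1E1: "ba c E1 E2 E1 E1 = 0" using evE1E1E1E1 evE1E1E1E2 evE1E1E2E1 evE1E1E2E2 evE1E2E1E1 evE1E2E1E2 evE1E2E2E1 evE1E2E2E2 evE2E1E1E1 evE2E1E1E2 evE2E1E2E1 evE2E1E2E2 evE2E2E1E1 evE2E2E1E2 evE2E2E2E1 evE2E2E2E2 Z unfolding ba_def by algebra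
  have zE1E2E1E2: "ba c E1 E2 E1 E2 = 0" using evE1E1E1E1 evE1E1E1E2 evE1E1E2E1 evE1E1E2E2 evE1E2E1E1 evE1E2E1E2 evE1E2E2E1 evE1E2E2E2 evE2E1E1E1 evE2E1E1E2 evE2E1E2E1 evE2E1E2E2 evE2E2E1E1 evE2E2E1E2 evE2E2E2E1 evE2E2E2E2 Z unfolding ba_def by algebra
  have zE1E2E2E1: "ba c E1 E2 E2 E1 = 0" using evE1E1E1E1 evE1E1E1E2 evE1E1E2E1 evE1E1E2E2 evE1E2E1E1 evE1E2E1E2 evE1E2E2E1 evE1E2E2E2 evE2E1E1E1 evE2E1E1E2 evE2E1E2E1 evE2E1E2E2 evE2E2E1E1 evE2E2E1E2 evE2E2E2E1 evE2E2E2E2 Z unfolding ba_def by algebra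
  have zE1E2E2E2: "ba c E1 E2 E2 E2 = 0" using evE1E1E1E1 evE1E1E1E2 evE1E1E2E1 evE1E1E2E2 evE1E2E1E1 evE1E2E1E2 evE1E2E2E1 evE1E2E2E2 evE2E1E1E1 evE2E1E1E2 evE2E1E2E1 evE2E1E2E2 evE2E2E1E1 evE2E2E1E2 evE2E2E2E1 evE2E2E2E2 Z unfolding ba_def by algebra
  have zE2E1E1E1: "ba c E2 E1 E1 E1 = 0" using evE1E1E1E1 evE1E1E1E2 evE1E1E2E1 evE1E1E2E2 evE1E2E1E1 evE1E2E1E2 evE1E2E2E1 evE1E2E2E2 evE2E1E1E1 evE2E1E1E2 evE2E1E2E1 evE2E1E2E2 evE2E2E1E1 evE2E2E1E2 evE2E2E2E1 evE2E2E2E2 Z unfolding ba_def by algebra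
  have zE2E1E1E2: "ba c E2 E1 E1 E2 = 0" using evE1E1E1E1 evE1E1E1E2 evE1E1E2E1 evE1E1E2E2 evE1E2E1E1 evE1E2E1E2 evE1E2E2E1 evE1E2E2E2 evE2E1E1E1 evE2E1E1E2 evE2E1E2E1 evE2E1E2E2 evE2E2E1E1 evE2E2E1E2 evE2E2E2E1 evE2E2E2E2 Z unfolding ba_def by algebra
  have zE2E1E2E1: "ba c E2 E1 E2 E1 = 0" using evE1E1E1E1 evE1E1E1E2 evE1E1E2E1 evE1E1E2E2 evE1E2E1E1 evE1E2E1E2 evE1E2E2E1 evE1E2E2E2 evE2E1E1E1 evE2E1E1E2 evE2E1E2E1 evE2E1E2E2 evE2E2E1E1 evE2E2E1E2 evE2E2E2E1 evE2E2E2E2 Z unfolding ba_def by algebra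
  have zE2E1E2E2: "ba c E2 E1 E2 E2 = 0" using evE1E1E1E1 evE1E1E1E2 evE1E1E2E1 evE1E1E2E2 evE1E2E1E1 evE1E2E1E2 evE1E2E2E1 evE1E2E2E2 evE2E1E1E1 evE2E1E1E2 evE2E1E2E1 evE2E1E2E2 evE2E2E1E1 evE2E2E1E2 evE2E2E2E1 evE2E2E2E2 Z unfolding ba_def by algebra
  have zE2E2E1E1: "ba c E2 E2 E1 E1 = 0" using evE1E1E1E1 evE1E1E1E2 evE1E1E2E1 evE1E1E2E2 evE1E2E1E1 evE1E2E1E2 evE1E2E2E1 evE1E2E2E2 evE2E1E1E1 evE2E1E1E2 evE2E1E2E1 evE2E1E2E2 evE2E2E1E1 evE2E2E1E2 evE2E2E2E1 evE2E2E2E2 Z unfolding ba_def by algebra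
  have zE2E2E1E2: "ba c E2 E2 E1 E2 = 0" using evE1E1E1E1 evE1E1E1E2 evE1E1E2E1 evE1E1E2E2 evE1E2E1E1 evE1E2E1E2 evE1E2E2E1 evE1E2E2E2 evE2E1E1E1 evE2E1E1E2 evE2E1E2E1 evE2E1E2E2 evE2E2E1E1 evE2E2E1E2 evE2E2E2E1 evE2E2E2E2 Z unfolding ba_def by algebra
  have zE2E2E2E1: "ba c E2 E2 E2 E1 = 0" using evE1E1E1E1 evE1E1E1E2 evE1E1E2E1 evE1E1E2E2 evE1E2E1E1 evE1E2E1E2 evE1E2E2E1 evE1E2E2E2 evE2E1E1E1 evE2E1E1E2 evE2E1E2E1 evE2E1E2E2 evE2E2E1E1 evE2E2E1E2 evE2E2E2E1 evE2E2E2E2 Z unfolding ba_def by algebra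
  have zE2E2E2E2: "ba c E2 E2 E2 E2 = 0" using evE1E1E1E1 evE1E1E1E2 evE1E1E2E1 evE1E1E2E2 evE1E2E1E1 evE1E2E1E2 evE1E2E2E1 evE1E2E2E2 evE2E1E1E1 evE2E1E1E2 evE2E1E2E1 evE2E1E2E2 evE2E2E1E1 evE2E2E1E2 evE2E2E2E1 evE2E2E2E2 Z unfolding ba_def by algebra
  have s3E1E1: "ba c E1 F1 E1 F1 = 0" using Z unfolding ba_def by algebra
  have s3E1E2: "ba c E1 F1 E2 F1 = 0" using Z unfolding ba_def by algebra
  have s3E2E1: "ba c E2 F1 E1 F1 = 0" using Z unfolding ba_def by algebra
  have s3E2E2: "ba c E2 F1 E2 F1 = 0" using Z unfolding ba_def by algebra
  have raE1E1: "ba c E1 E1 F1 F1 = - ba c E1 F1 E1 F1" using RA[of E1 E1 F1 F1] by simp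
  have s2E1E1: "ba c E1 E1 F1 F1 = 0" using raE1E1 s3E1E1 by simp
  have s4E1E1: "ba c F1 E1 E1 F1 = 0" using CY[of E1 E1 F1 F1] s2E1E1 s3E1E1 by simp
  have mlE1E1: "c E1 E1 E1 * c E1 F1 F1 + c E1 E1 E2 * c E2 F1 F1 = c E1 F1 F1 * c E1 F1 F1" using s2E1E1 Z unfolding ba_def by algebra
  have mrE1E1: "c E1 E1 E1 * c F1 E1 F1 + c E1 E1 E2 * c F1 E2 F1 = c F1 E1 F1 * c F1 E1 F1" using s4E1E1 Z unfolding ba_def by algebra
  have raE1E2: "ba c E1 E2 F1 F1 = - ba c E1 F1 E2 F1" using RA[of E1 E2 F1 F1] by simp
  have s2E1E2: "ba c E1 E2 F1 F1 = 0" using raE1E2 s3E1E2 by simp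
  have s4E1E2: "ba c F1 E1 E2 F1 = 0" using CY[of E1 E2 F1 F1] s2E1E2 s3E2E1 by simp
  have mlE1E2: "c E1 E2 E1 * c E1 F1 F1 + c E1 E2 E2 * c E2 F1 F1 = c E1 F1 F1 * c E2 F1 F1" using s2E1E2 Z unfolding ba_def by algebra
  have mrE1E2: "c E1 E2 E1 * c F1 E1 F1 + c E1 E2 E2 * c F1 E2 F1 = c F1 E1 F1 * c F1 E2 F1" using s4E1E2 Z unfolding ba_def by algebra
  have raE2E1: "ba c E2 E1 F1 F1 = - ba c E2 F1 E1 F1" using RA[of E2 E1 F1 F1] by simp
  have s2E2E1: "ba c E2 E1 F1 F1 = 0" using raE2E1 s3E2E1 by simp
  have s4E2E1: "ba c F1 E2 E1 F1 = 0" using CY[of E2 E1 F1 F1] s2E2E1 s3E1E2 by simp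
  have mlE2E1: "c E2 E1 E1 * c E1 F1 F1 + c E2 E1 E2 * c E2 F1 F1 = c E2 F1 F1 * c E1 F1 F1" using s2E2E1 Z unfolding ba_def by algebra
  have mrE2E1: "c E2 E1 E1 * c F1 E1 F1 + c E2 E1 E2 * c F1 E2 F1 = c F1 E2 F1 * c F1 E1 F1" using s4E2E1 Z unfolding ba_def by algebra
  have raE2E2: "ba c E2 E2 F1 F1 = - ba c E2 F1 E2 F1" using RA[of E2 E2 F1 F1] by simp
  have s2E2E2: "ba c E2 E2 F1 F1 = 0" using raE2E2 s3E2E2 by simp
  have s4E2E2: "ba c F1 E2 E2 F1 = 0" using CY[of E2 E2 F1 F1] s2E2E2 s3E2E2 by simp
  have mlE2E2: "c E2 E2 E1 * c E1 F1 F1 + c E2 E2 E2 * c E2 F1 F1 = c E2 F1 F1 * c E2 F1 F1" using s2E2E2 Z unfolding ba_def by algebra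
  have mrE2E2: "c E2 E2 E1 * c F1 E1 F1 + c E2 E2 E2 * c F1 E2 F1 = c F1 E2 F1 * c F1 E2 F1" using s4E2E2 Z unfolding ba_def by algebra
  have s5: "ba c F1 F1 F1 F1 = 0" using CY[of F1 F1 F1 F1] by simp
  have rbE1E1: "ba c F1 E1 F1 E1 = - ba c F1 F1 E1 E1" using RA[of F1 E1 F1 E1] by simp
  have cyE1E1: "ba c E1 F1 F1 E1 + ba c F1 F1 E1 E1 - ba c F1 E1 F1 E1 = 0" using CY[of E1 F1 F1 E1] by simp
  have w1E1E1: "c F1 F1 E1 * c E1 E1 E1 + c F1 F1 E2 * c E2 E1 E1 = c E1 F1 F1 * c F1 F1 E1" using rbE1E1 Z unfolding ba_def by algebra
  have w2E1E1: "c E1 E1 E1 * c F1 F1 E1 + c E1 E2 E1 * c F1 F1 E2 = (3 * c E1 F1 F1 - 2 * c F1 E1 F1) * c F1 F1 E1" using cyE1E1 w1E1E1 Z unfolding ba_def by algebra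
  have rbE1E2: "ba c F1 E1 F1 E2 = - ba c F1 F1 E1 E2" using RA[of F1 E1 F1 E2] by simp
  have cyE1E2: "ba c E1 F1 F1 E2 + ba c F1 F1 E1 E2 - ba c F1 E1 F1 E2 = 0" using CY[of E1 F1 F1 E2] by simp
  have w1E1E2: "c F1 F1 E1 * c E1 E1 E2 + c F1 F1 E2 * c E2 E1 E2 = c E1 F1 F1 * c F1 F1 E2" using rbE1E2 Z unfolding ba_def by algebra
  have w2E1E2: "c E1 E1 E2 * c F1 F1 E1 + c E1 E2 E2 * c F1 F1 E2 = (3 * c E1 F1 F1 - 2 * c F1 E1 F1) * c F1 F1 E2" using cyE1E2 w1E1E2 Z unfolding ba_def by algebra
  have rbE2E1: "ba c F1 E2 F1 E1 = - ba c F1 F1 E2 E1" using RA[of F1 E2 F1 E1] by simp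
  have cyE2E1: "ba c E2 F1 F1 E1 + ba c F1 F1 E2 E1 - ba c F1 E2 F1 E1 = 0" using CY[of E2 F1 F1 E1] by simp
  have w1E2E1: "c F1 F1 E1 * c E1 E2 E1 + c F1 F1 E2 * c E2 E2 E1 = c E2 F1 F1 * c F1 F1 E1" using rbE2E1 Z unfolding ba_def by algebra
  have w2E2E1: "c E2 E1 E1 * c F1 F1 E1 + c E2 E2 E1 * c F1 F1 E2 = (3 * c E2 F1 F1 - 2 * c F1 E2 F1) * c F1 F1 E1" using cyE2E1 w1E2E1 Z unfolding ba_def by algebra
  have rbE2E2: "ba c F1 E2 F1 E2 = - ba c F1 F1 E2 E2" using RA[of F1 E2 F1 E2] by simp
  have cyE2E2: "ba c E2 F1 F1 E2 + ba c F1 F1 E2 E2 - ba c F1 E2 F1 E2 = 0" using CY[of E2 F1 F1 E2] by simp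
  have w1E2E2: "c F1 F1 E1 * c E1 E2 E2 + c F1 F1 E2 * c E2 E2 E2 = c E2 F1 F1 * c F1 F1 E2" using rbE2E2 Z unfolding ba_def by algebra
  have w2E2E2: "c E2 E1 E2 * c F1 F1 E1 + c E2 E2 E2 * c F1 F1 E2 = (3 * c E2 F1 F1 - 2 * c F1 E2 F1) * c F1 F1 E2" using cyE2E2 w1E2E2 Z unfolding ba_def by algebra
  have kE1E1: "(c E1 F1 F1 - c F1 E1 F1) * (c E1 F1 F1 - c F1 E1 F1) * c F1 F1 E1 = 0" using zE1E1E1E1 zE1E1E2E1 w1E1E1 w1E1E2 w1E2E1 w1E2E2 w2E1E1 w2E1E2 w2E2E1 w2E2E2 mlE1E1 mlE1E2 mlE2E1 mlE2E2 mrE1E1 mrE1E2 mrE2E1 mrE2E2 Z unfolding ba_def by algebra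
  have kkE1E1: "(c E1 F1 F1 - c F1 E1 F1) * c F1 F1 E1 = 0" using kE1E1 by (metis mult_eq_0_iff)
  have t1E1E1: "ba c F1 F1 E1 E1 = 0" using w1E1E1 kkE1E1 Z unfolding ba_def by algebra
  have t2E1E1: "ba c F1 E1 F1 E1 = 0" using rbE1E1 t1E1E1 by simp
  have t3E1E1: "ba c E1 F1 F1 E1 = 0" using cyE1E1 t1E1E1 t2E1E1 by simp
  have kE1E2: "(c E1 F1 F1 - c F1 E1 F1) * (c E1 F1 F1 - c F1 E1 F1) * c F1 F1 E2 = 0" using zE1E1E1E2 zE1E1E2E2 w1E1E1 w1E1E2 w1E2E1 w1E2E2 w2E1E1 w2E1E2 w2E2E1 w2E2E2 mlE1E1 mlE1E2 mlE2E1 mlE2E2 mrE1E1 mrE1E2 mrE2E1 mrE2E2 Z unfolding ba_def by algebra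
  have kkE1E2: "(c E1 F1 F1 - c F1 E1 F1) * c F1 F1 E2 = 0" using kE1E2 by (metis mult_eq_0_iff)
  have t1E1E2: "ba c F1 F1 E1 E2 = 0" using w1E1E2 kkE1E2 Z unfolding ba_def by algebra
  have t2E1E2: "ba c F1 E1 F1 E2 = 0" using rbE1E2 t1E1E2 by simp
  have t3E1E2: "ba c E1 F1 F1 E2 = 0" using cyE1E2 t1E1E2 t2E1E2 by simp
  have kE2E1: "(c E2 F1 F1 - c F1 E2 F1) * (c E2 F1 F1 - c F1 E2 F1) * c F1 F1 E1 = 0" using zE2E2E1E1 zE2E2E2E1 w1E1E1 w1E1E2 w1E2E1 w1E2E2 w2E1E1 w2E1E2 w2E2E1 w2E2E2 mlE1E1 mlE1E2 mlE2E1 mlE2E2 mrE1E1 mrE1E2 mrE2E1 mrE2E2 Z unfolding ba_def by algebra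
  have kkE2E1: "(c E2 F1 F1 - c F1 E2 F1) * c F1 F1 E1 = 0" using kE2E1 by (metis mult_eq_0_iff)
  have t1E2E1: "ba c F1 F1 E2 E1 = 0" using w1E2E1 kkE2E1 Z unfolding ba_def by algebra
  have t2E2E1: "ba c F1 E2 F1 E1 = 0" using rbE2E1 t1E2E1 by simp
  have t3E2E1: "ba c E2 F1 F1 E1 = 0" using cyE2E1 t1E2E1 t2E2E1 by simp
  have kE2E2: "(c E2 F1 F1 - c F1 E2 F1) * (c E2 F1 F1 - c F1 E2 F1) * c F1 F1 E2 = 0" using zE2E2E1E2 zE2E2E2E2 w1E1E1 w1E1E2 w1E2E1 w1E2E2 w2E1E1 w2E1E2 w2E2E1 w2E2E2 mlE1E1 mlE1E2 mlE2E1 mlE2E2 mrE1E1 mrE1E2 mrE2E1 mrE2E2 Z unfolding ba_def by algebra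
  have kkE2E2: "(c E2 F1 F1 - c F1 E2 F1) * c F1 F1 E2 = 0" using kE2E2 by (metis mult_eq_0_iff)
  have t1E2E2: "ba c F1 F1 E2 E2 = 0" using w1E2E2 kkE2E2 Z unfolding ba_def by algebra
  have t2E2E2: "ba c F1 E2 F1 E2 = 0" using rbE2E2 t1E2E2 by simp
  have t3E2E2: "ba c E2 F1 F1 E2 = 0" using cyE2E2 t1E2E2 t2E2E2 by simp
  note facts = zE1E1E1E1 zE1E1E1E2 zE1E1E2E1 zE1E1E2E2 zE1E2E1E1 zE1E2E1E2 zE1E2E2E1 zE1E2E2E2 zE2E1E1E1 zE2E1E1E2 zE2E1E2E1 zE2E1E2E2 zE2E2E1E1 zE2E2E1E2 zE2E2E2E1 zE2E2E2E2 s2E1E1 s2E1E2 s2E2E1 s2E2E2 s3E1E1 s3E1E2 s3E2E1 s3E2E2 s4E1E1 s4E1E2 s4E2E1 s4E2E2 s5 t1E1E1 t1E1E2 t1E2E1 t1E2E2 t2E1E1 t2E1E2 t2E2E1 t2E2E2 t3E1E1 t3E1E2 t3E2E1 t3E2E2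
  show ?thesis
    by (cases i; cases j; cases l; cases k; (simp only: facts; fail)?; simp add: ba_def Z)
qed

definition dl :: "bidx \<Rightarrow> sv" where "dl i = (\<lambda>t. if t = i then 1 else 0)"

lemma sum_basis: "(\<Sum>x\<in>basis_set. f x) = f E1 + f E2 + f F1"
  by (simp add: basis_set_def add.assoc)

lemma smul_dl: "smul c (dl i) (dl j) = c i j"
  by (rule ext) (cases i; cases j; simp add: smul_def sum_basis dl_def)

lemma smul_l: "smul c v (dl l) k = v E1 * c E1 l k + v E2 * c E2 l k + v F1 * c F1 l k"
  by (cases l; simp add: smul_def sum_basis dl_def)

lemma smul_r: "smul c (dl i) v k = v E1 * c i E1 k + v E2 * c i E2 k + v F1 * c i F1 k"
  by (cases i; simp add: smul_def sum_basis dl_def)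

lemma sassoc_dl: "sassoc c (dl i) (dl j) (dl l) k = ba c i j l k"
  by (simp add: sassoc_def smul_dl smul_l smul_r ba_def)

lemma homog_dl: "homog (dl i) (bdeg i)"
  by (cases i; auto simp: homog_def dl_def)

lemma expand: "sassoc c x y z k = (\<Sum>i\<in>basis_set. \<Sum>j\<in>basis_set. \<Sum>l\<in>basis_set. x i * y j * z l * ba c i j l k)"
  unfolding sassoc_def smul_def sum_basis ba_def by algebra

theorem mainTheorem18:
  fixes c :: sconst
  assumes "graded c"
    and "minus_one_one c"
  shows "associative c"
proof -
  have G: "\<And>i j k. bdeg k \<noteq> (bdeg i + bdeg j) mod 2 \<Longrightarrow> c i j k = 0"
    using assms(1) unfolding graded_def by blast
  have Zs: "c E1 E1 F1 = 0" "c E1 E2 F1 = 0" "c E1 F1 E1 = 0" "c E1 F1 E2 = 0" "c E2 E1 F1 = 0" "c E2 E2 F1 = 0" "c E2 F1 E1 = 0" "c E2 F1 E2 = 0" "c F1 E1 E1 = 0" "c F1 E1 E2 = 0" "c F1 E2 E1 = 0" "c F1 E2 E2 = 0" "c F1 F1 F1 = 0"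
    by (rule G; simp)+
  have ra: "right_alternative c" using assms(2) by (simp add: minus_one_one_def)
  have RA: "ba c i j l k = - ((-1::complex) ^ (bdeg j * bdeg l)) * ba c i l j k" for i j l k
  proof -
    have "sassoc c (dl i) (dl j) (dl l) = (\<lambda>k. - ((-1::complex) ^ (bdeg j * bdeg l)) * sassoc c (dl i) (dl l) (dl j) k)"
      using ra homog_dl unfolding right_alternative_def by blast
    then show ?thesis by (metis sassoc_dl)
  qed
  have CY: "ba c i j l k + (-1::complex) ^ (bdeg i * bdeg j + bdeg i * bdeg l) * ba c j l i k
        + (-1::complex) ^ (bdeg l * bdeg j + bdeg i * bdeg l) * ba c l i j k = 0" for i j l k
  proof -
    have "\<forall>k. sassoc c (dl i) (dl j) (dl l) k
            + (-1::complex) ^ (bdeg i * bdeg j + bdeg i * bdeg l) * sassoc c (dl j) (dl l) (dl i) k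
            + (-1::complex) ^ (bdeg l * bdeg j + bdeg i * bdeg l) * sassoc c (dl l) (dl i) (dl j) k = 0"
      using assms(2) homog_dl unfolding minus_one_one_def by blast
    then show ?thesis by (simp add: sassoc_dl)
  qed
  have all0: "ba c i j l k = 0" for i j l k
    by (rule core[OF Zs RA CY])
  show ?thesis
    unfolding associative_def
    by (intro allI ext) (simp add: expand all0)
qed

end
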